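(* Let $h_6$ be the real two-photon Lie algebra. A Lie bialgebra structure $\delta$ on $h_6$ satisfies $\delta(B_+)=0$ if and only if there exist real numbers $a_2,a_3,a_4,a_5,c_2$ with $$a_2a_3-a_5c_2=0$$ such that $\delta(X)=[1\otimes X+X\otimes 1,\,r]$ for all $X\in h_6$, where $$r=a_2\,N\wedge B_++a_3\,A_+\wedge M+a_4\,B_+\wedge M+a_5\,A_+\wedge B_++c_2\,A_+\wedge A_- .$$ Moreover, $[[r,r]]=-c_2^2\,A_+\wedge A_-\wedge M$, so $r$ is standard (nonzero Schouten bracket) if and only if $c_2\neq 0$, in which case $a_5=a_2a_3/c_2$; and $r$ satisfies the classical Yang–Baxter equation (non-standard case) if and only if $c_2=0$, in which case $a_2a_3=0$.
   Context: The two-photon Lie algebra $h_6$ is the real Lie algebra with basis $\{N,A_+,A_-,B_+,B_-,M\}$ and brackets $[N,A_+]=A_+$, $[N,A_-]=-A_-$, $[A_-,A_+]=M$, $[N,B_+]=2B_+$, $[N,B_-]=-2B_-$, $[B_-,B_+]=4N+2M$, $[A_+,B_-]=-2A_-$, $[A_+,B_+]=0$, $[A_-,B_+]=2A_+$, $[A_-,B_-]=0$, and $M$ central. A Lie bialgebra structure on a Lie algebra $g$ is a linear map $\delta:g\to g\otimes g$ which is a 1-cocycle, i.e. $\delta([X,Y])=[\delta(X),1\otimes Y+Y\otimes 1]+[1\otimes X+X\otimes 1,\delta(Y)]$, and whose dual map $g^*\otimes g^*\to g^*$ is a Lie bracket. For $r=\sum r^{ij}X_i\otimes X_j\in g\wedge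 g$, the Schouten bracket is $[[r,r]]=[r_{12},r_{13}]+[r_{12},r_{23}]+[r_{13},r_{23}]$ with $r_{12}=\sum r^{ij}X_i\otimes X_j\otimes 1$, $r_{13}=\sum r^{ij}X_i\otimes 1\otimes X_j$, $r_{23}=\sum r^{ij}1\otimes X_i\otimes X_j$. Here $X\wedge Y=X\otimes Y-Y\otimes X$. *)

theory Defs
  imports Complex_Main
begin

text \<open>Basis of the two-photon Lie algebra h6: N, A+, A-, B+, B-, M.
  Elements of h6 are coordinate functions gb => real (w.r.t. this basis),
  elements of h6 (x) h6 are gb => gb => real, and of h6 (x) h6 (x) h6 are gb => gb => gb => real.\<close>

datatype gb = N | Ap | Am | Bp | Bm | M

lemma UNIV_gb: "(UNIV :: gb set) = {N, Ap, Am, Bp, Bm, M}"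
  by (auto intro: gb.exhaust)

instance gb :: finite
  by standard (simp add: UNIV_gb)

type_synonym vec = "gb \<Rightarrow> real"
type_synonym tens2 = "gb \<Rightarrow> gb \<Rightarrow> real"
type_synonym tens3 = "gb \<Rightarrow> gb \<Rightarrow> gb \<Rightarrow> real"

definition brk :: "gb \<Rightarrow> gb \<Rightarrow> gb \<Rightarrow> real" where
  "brk a b k =
     (if a = N \<and> b = Ap then (if k = Ap then 1 else 0)
      else if a = N \<and> b = Am then (if k = Am then -1 else 0)
      else if a = Am \<and> b = Ap then (if k = M then 1 else 0)
      else if a = N \<and> b = Bp then (if k = Bp then 2 else 0)
      else if a = N \<and> b = Bm then (if k = Bm then -2 else 0)
      else if a = Bm \<and> b = Bp then (if k = N then 4 else if k = M then 2 else 0)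
      else if a = Ap \<and> b = Bm then (if k = Am then -2 else 0)
      else if a = Am \<and> b = Bp then (if k = Ap then 2 else 0)
      else 0)"

text \<open>Structure constants: sc a b k = coefficient of basis element k in [a,b]
  (antisymmetric extension of brk; all brackets not listed are zero, M is central).\<close>
definition sc :: "gb \<Rightarrow> gb \<Rightarrow> gb \<Rightarrow> real" where
  "sc a b k = brk a b k - brk b a k"

definition e :: "gb \<Rightarrow> vec" where
  "e a = (\<lambda>k. if k = a then 1 else 0)"

definition lie :: "vec \<Rightarrow> vec \<Rightarrow> vec" where
  "lie X Y = (\<lambda>k. \<Sum>a\<in>UNIV. \<Sum>b\<in>UNIV. X a * Y b * sc a b k)"

text \<open>[1 (x) X + X (x) 1, t] = ad_X t on g (x) g.\<close>
definition ad2 :: "vec \<Rightarrow> tens2 \<Rightarrow> tens2" where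
  "ad2 X t = (\<lambda>i j. \<Sum>a\<in>UNIV. lie X (e a) i * t a j + lie X (e a) j * t i a)"

definition wedge :: "vec \<Rightarrow> vec \<Rightarrow> tens2" where
  "wedge u v = (\<lambda>i j. u i * v j - v i * u j)"

definition wedge3 :: "vec \<Rightarrow> vec \<Rightarrow> vec \<Rightarrow> tens3" where
  "wedge3 x y z = (\<lambda>i j k.
      x i * y j * z k + y i * z j * x k + z i * x j * y k
    - y i * x j * z k - x i * z j * y k - z i * y j * x k)"

text \<open>Schouten bracket [[r,r]] = [r12,r13] + [r12,r23] + [r13,r23].\<close>
definition schouten :: "tens2 \<Rightarrow> tens3" where
  "schouten r = (\<lambda>p q u. \<Sum>i\<in>UNIV. \<Sum>j\<in>UNIV. \<Sum>k\<in>UNIV. \<Sum>l\<in>UNIV.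
       r i j * r k l *
         (sc i k p * e j q * e l u + e i p * sc j k q * e l u + e i p * e k q * sc j l u))"

definition linear_map :: "(vec \<Rightarrow> tens2) \<Rightarrow> bool" where
  "linear_map \<delta> \<longleftrightarrow> (\<forall>a b X Y. \<delta> (\<lambda>k. a * X k + b * Y k) = (\<lambda>i j. a * \<delta> X i j + b * \<delta> Y i j))"

definition cocycle :: "(vec \<Rightarrow> tens2) \<Rightarrow> bool" where
  "cocycle \<delta> \<longleftrightarrow> (\<forall>X Y. \<delta> (lie X Y) = (\<lambda>i j. ad2 X (\<delta> Y) i j - ad2 Y (\<delta> X) i j))"

text \<open>The dual map g* (x) g* -> g*, [e^i, e^j] = \<Sum>_k \<delta>(e_k)^{ij} e^k, is a Lie bracket:
  antisymmetric and satisfying the Jacobi identity (bilinearity is automatic).\<close>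
definition dual_is_lie :: "(vec \<Rightarrow> tens2) \<Rightarrow> bool" where
  "dual_is_lie \<delta> \<longleftrightarrow>
     (\<forall>k i j. \<delta> (e k) i j = - \<delta> (e k) j i) \<and>
     (\<forall>i j m l. (\<Sum>k\<in>UNIV. \<delta> (e k) i j * \<delta> (e l) k m
                          + \<delta> (e k) j m * \<delta> (e l) k i
                          + \<delta> (e k) m i * \<delta> (e l) k j) = 0)"

definition lie_bialgebra :: "(vec \<Rightarrow> tens2) \<Rightarrow> bool" where
  "lie_bialgebra \<delta> \<longleftrightarrow> linear_map \<delta> \<and> cocycle \<delta> \<and> dual_is_lie \<delta>"

definition rmat :: "real \<Rightarrow> real \<Rightarrow> real \<Rightarrow> real \<Rightarrow> real \<Rightarrow> tens2" where
  "rmat a2 a3 a4 a5 c2 = (\<lambda>i j.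
      a2 * wedge (e N) (e Bp) i j + a3 * wedge (e Ap) (e M) i j + a4 * wedge (e Bp) (e M) i j
    + a5 * wedge (e Ap) (e Bp) i j + c2 * wedge (e Ap) (e Am) i j)"

end

theory Submission
  imports Defs
begin


lemma mult_ind1 [simp]: "(x::real) * (if P then 1 else 0) = (if P then x else 0)" by simp
lemma mult_ind2 [simp]: "(if P then 1 else 0) * (x::real) = (if P then x else 0)" by simp

lemma if_mult1 [simp]: "(if P then x else 0) * (y::real) = (if P then x * y else 0)" by simp
lemma if_mult2 [simp]: "(y::real) * (if P then x else 0) = (if P then y * x else 0)" by simp

lemma sum_if_out [simp]: "(\<Sum>b\<in>S. if P then f b else (0::real)) = (if P then \<Sum>b\<in>S. f b else 0)" by simp

lemma sum_gb: "(\<Sum>x\<in>UNIV. f x) = f N + f Ap + f Am + f Bp + f Bm + (f M :: real)"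
  by (simp add: UNIV_gb)

lemma lin_zero: "linear_map \<delta> \<Longrightarrow> \<delta> (\<lambda>k. 0) = (\<lambda>i j. 0)"
  unfolding linear_map_def
  by (drule spec[of _ 0], drule spec[of _ 0], drule spec[of _ "\<lambda>k. 0"], drule spec[of _ "\<lambda>k. 0"]) simp

lemma lin_sum:
  assumes L: "linear_map \<delta>" and F: "finite A"
  shows "\<delta> (\<lambda>k. \<Sum>a\<in>A. c a * e a k) = (\<lambda>i j. \<Sum>a\<in>A. c a * \<delta> (e a) i j)"
  using F
proof (induction A rule: finite_induct)
  case empty then show ?case using lin_zero[OF L] by simp
next
  case (insert x F)
  have "\<delta> (\<lambda>k. \<Sum>a\<in>insert x F. c a * e a k) = \<delta> (\<lambda>k. c x * e x k + 1 * (\<Sum>a\<in>F. c a * e a k))"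
    using insert by simp
  also have "\<dots> = (\<lambda>i j. c x * \<delta> (e x) i j + 1 * \<delta> (\<lambda>k. \<Sum>a\<in>F. c a * e a k) i j)"
    using L[unfolded linear_map_def, rule_format, of "c x" "e x" 1 "\<lambda>k. \<Sum>a\<in>F. c a * e a k"] by simp
  finally show ?case using insert by simp
qed

lemma vec_decomp: "X = (\<lambda>k. \<Sum>a\<in>UNIV. X a * e a k)"
  by (rule ext) (simp add: e_def)

lemma lin_expand: "linear_map \<delta> \<Longrightarrow> \<delta> X = (\<lambda>i j. \<Sum>a\<in>UNIV. X a * \<delta> (e a) i j)"
  by (subst vec_decomp) (simp add: lin_sum)

lemma lie_e: "lie (e a) (e b) = (\<lambda>k. sc a b k)"
  by (rule ext) (simp add: lie_def e_def)

lemma lie_e_exp: "lie (e a) (e b) = (\<lambda>k. \<Sum>c\<in>UNIV. sc a b c * e c k)"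
  by (rule ext) (simp add: lie_def e_def)

lemma ad2_e: "ad2 (e a) t i j = (\<Sum>c\<in>UNIV. sc a c i * t c j + sc a c j * t i c)"
  by (simp add: ad2_def lie_e)

lemma lie_e1: "lie (e a) Y k = (\<Sum>b\<in>UNIV. Y b * sc a b k)"
  by (simp add: lie_def e_def)

lemma lie_lin: "lie X Y k = (\<Sum>a\<in>UNIV. X a * lie (e a) Y k)"
  by (simp only: lie_e1) (simp add: lie_def sum_distrib_left mult.assoc)

lemma ad2_lin: "ad2 X t i j = (\<Sum>a\<in>UNIV. X a * ad2 (e a) t i j)"
proof -
  have "ad2 X t i j = (\<Sum>c\<in>UNIV. (\<Sum>a\<in>UNIV. X a * lie (e a) (e c) i) * t c j + (\<Sum>a\<in>UNIV. X a * lie (e a) (e c) j) * t i c)"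
    unfolding ad2_def by (simp only: lie_lin[of X "e _"])
  also have "\<dots> = (\<Sum>a\<in>UNIV. X a * ad2 (e a) t i j)"
    unfolding ad2_def by (simp add: sum_distrib_left sum_distrib_right distrib_left sum.distrib mult.assoc) (rule arg_cong2[where f="(+)"]; rule sum.swap)
  finally show ?thesis .
qed

lemma coc_e:
  assumes L: "linear_map \<delta>" and C: "cocycle \<delta>"
  shows "(\<Sum>c\<in>UNIV. sc a b c * \<delta> (e c) i j) =
     (\<Sum>c\<in>UNIV. sc a c i * \<delta> (e b) c j + sc a c j * \<delta> (e b) i c) -
     (\<Sum>c\<in>UNIV. sc b c i * \<delta> (e a) c j + sc b c j * \<delta> (e a) i c)"
proof -
  have "\<delta> (lie (e a) (e b)) i j = ad2 (e a) (\<delta> (e b)) i j - ad2 (e b) (\<delta> (e a)) i j"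
    using C unfolding cocycle_def by metis
  moreover have "\<delta> (lie (e a) (e b)) i j = (\<Sum>c\<in>UNIV. sc a b c * \<delta> (e c) i j)"
    by (subst lie_e_exp) (simp add: lin_sum[OF L])
  ultimately show ?thesis by (simp add: ad2_e)
qed
lemma sc_tab [simp]:
  "sc N N N = 0"
  "sc N N Ap = 0"
  "sc N N Am = 0"
  "sc N N Bp = 0"
  "sc N N Bm = 0"
  "sc N N M = 0"
  "sc N Ap N = 0"
  "sc N Ap Ap = 1"
  "sc N Ap Am = 0"
  "sc N Ap Bp = 0"
  "sc N Ap Bm = 0"
  "sc N Ap M = 0"
  "sc N Am N = 0"
  "sc N Am Ap = 0"
  "sc N Am Am = -1"
  "sc N Am Bp = 0"
  "sc N Am Bm = 0"
  "sc N Am M = 0"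
  "sc N Bp N = 0"
  "sc N Bp Ap = 0"
  "sc N Bp Am = 0"
  "sc N Bp Bp = 2"
  "sc N Bp Bm = 0"
  "sc N Bp M = 0"
  "sc N Bm N = 0"
  "sc N Bm Ap = 0"
  "sc N Bm Am = 0"
  "sc N Bm Bp = 0"
  "sc N Bm Bm = -2"
  "sc N Bm M = 0"
  "sc N M N = 0"
  "sc N M Ap = 0"
  "sc N M Am = 0"
  "sc N M Bp = 0"
  "sc N M Bm = 0"
  "sc N M M = 0"
  "sc Ap N N = 0"
  "sc Ap N Ap = -1"
  "sc Ap N Am = 0"
  "sc Ap N Bp = 0"
  "sc Ap N Bm = 0"
  "sc Ap N M = 0"
  "sc Ap Ap N = 0"
  "sc Ap Ap Ap = 0"
  "sc Ap Ap Am = 0"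
  "sc Ap Ap Bp = 0"
  "sc Ap Ap Bm = 0"
  "sc Ap Ap M = 0"
  "sc Ap Am N = 0"
  "sc Ap Am Ap = 0"
  "sc Ap Am Am = 0"
  "sc Ap Am Bp = 0"
  "sc Ap Am Bm = 0"
  "sc Ap Am M = -1"
  "sc Ap Bp N = 0"
  "sc Ap Bp Ap = 0"
  "sc Ap Bp Am = 0"
  "sc Ap Bp Bp = 0"
  "sc Ap Bp Bm = 0"
  "sc Ap Bp M = 0"
  "sc Ap Bm N = 0"
  "sc Ap Bm Ap = 0"
  "sc Ap Bm Am = -2"
  "sc Ap Bm Bp = 0"
  "sc Ap Bm Bm = 0"
  "sc Ap Bm M = 0"
  "sc Ap M N = 0"
  "sc Ap M Ap = 0"
  "sc Ap M Am = 0"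
  "sc Ap M Bp = 0"
  "sc Ap M Bm = 0"
  "sc Ap M M = 0"
  "sc Am N N = 0"
  "sc Am N Ap = 0"
  "sc Am N Am = 1"
  "sc Am N Bp = 0"
  "sc Am N Bm = 0"
  "sc Am N M = 0"
  "sc Am Ap N = 0"
  "sc Am Ap Ap = 0"
  "sc Am Ap Am = 0"
  "sc Am Ap Bp = 0"
  "sc Am Ap Bm = 0"
  "sc Am Ap M = 1"
  "sc Am Am N = 0"
  "sc Am Am Ap = 0"
  "sc Am Am Am = 0"
  "sc Am Am Bp = 0"
  "sc Am Am Bm = 0"
  "sc Am Am M = 0"
  "sc Am Bp N = 0"
  "sc Am Bp Ap = 2"
  "sc Am Bp Am = 0"
  "sc Am Bp Bp = 0"
  "sc Am Bp Bm = 0"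
  "sc Am Bp M = 0"
  "sc Am Bm N = 0"
  "sc Am Bm Ap = 0"
  "sc Am Bm Am = 0"
  "sc Am Bm Bp = 0"
  "sc Am Bm Bm = 0"
  "sc Am Bm M = 0"
  "sc Am M N = 0"
  "sc Am M Ap = 0"
  "sc Am M Am = 0"
  "sc Am M Bp = 0"
  "sc Am M Bm = 0"
  "sc Am M M = 0"
  "sc Bp N N = 0"
  "sc Bp N Ap = 0"
  "sc Bp N Am = 0"
  "sc Bp N Bp = -2"
  "sc Bp N Bm = 0"
  "sc Bp N M = 0"
  "sc Bp Ap N = 0"
  "sc Bp Ap Ap = 0"
  "sc Bp Ap Am = 0"
  "sc Bp Ap Bp = 0"
  "sc Bp Ap Bm = 0"
  "sc Bp Ap M = 0"
  "sc Bp Am N = 0"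
  "sc Bp Am Ap = -2"
  "sc Bp Am Am = 0"
  "sc Bp Am Bp = 0"
  "sc Bp Am Bm = 0"
  "sc Bp Am M = 0"
  "sc Bp Bp N = 0"
  "sc Bp Bp Ap = 0"
  "sc Bp Bp Am = 0"
  "sc Bp Bp Bp = 0"
  "sc Bp Bp Bm = 0"
  "sc Bp Bp M = 0"
  "sc Bp Bm N = -4"
  "sc Bp Bm Ap = 0"
  "sc Bp Bm Am = 0"
  "sc Bp Bm Bp = 0"
  "sc Bp Bm Bm = 0"
  "sc Bp Bm M = -2"
  "sc Bp M N = 0"
  "sc Bp M Ap = 0"
  "sc Bp M Am = 0"
  "sc Bp M Bp = 0"
  "sc Bp M Bm = 0"
  "sc Bp M M = 0"
  "sc Bm N N = 0"
  "sc Bm N Ap = 0"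
  "sc Bm N Am = 0"
  "sc Bm N Bp = 0"
  "sc Bm N Bm = 2"
  "sc Bm N M = 0"
  "sc Bm Ap N = 0"
  "sc Bm Ap Ap = 0"
  "sc Bm Ap Am = 2"
  "sc Bm Ap Bp = 0"
  "sc Bm Ap Bm = 0"
  "sc Bm Ap M = 0"
  "sc Bm Am N = 0"
  "sc Bm Am Ap = 0"
  "sc Bm Am Am = 0"
  "sc Bm Am Bp = 0"
  "sc Bm Am Bm = 0"
  "sc Bm Am M = 0"
  "sc Bm Bp N = 4"
  "sc Bm Bp Ap = 0"
  "sc Bm Bp Am = 0"
  "sc Bm Bp Bp = 0"
  "sc Bm Bp Bm = 0"
  "sc Bm Bp M = 2"
  "sc Bm Bm N = 0"
  "sc Bm Bm Ap = 0"
  "sc Bm Bm Am = 0"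
  "sc Bm Bm Bp = 0"
  "sc Bm Bm Bm = 0"
  "sc Bm Bm M = 0"
  "sc Bm M N = 0"
  "sc Bm M Ap = 0"
  "sc Bm M Am = 0"
  "sc Bm M Bp = 0"
  "sc Bm M Bm = 0"
  "sc Bm M M = 0"
  "sc M N N = 0"
  "sc M N Ap = 0"
  "sc M N Am = 0"
  "sc M N Bp = 0"
  "sc M N Bm = 0"
  "sc M N M = 0"
  "sc M Ap N = 0"
  "sc M Ap Ap = 0"
  "sc M Ap Am = 0"
  "sc M Ap Bp = 0"
  "sc M Ap Bm = 0"
  "sc M Ap M = 0"
  "sc M Am N = 0"
  "sc M Am Ap = 0"
  "sc M Am Am = 0"
  "sc M Am Bp = 0"
  "sc M Am Bm = 0"
  "sc M Am M = 0"
  "sc M Bp N = 0"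
  "sc M Bp Ap = 0"
  "sc M Bp Am = 0"
  "sc M Bp Bp = 0"
  "sc M Bp Bm = 0"
  "sc M Bp M = 0"
  "sc M Bm N = 0"
  "sc M Bm Ap = 0"
  "sc M Bm Am = 0"
  "sc M Bm Bp = 0"
  "sc M Bm Bm = 0"
  "sc M Bm M = 0"
  "sc M M N = 0"
  "sc M M Ap = 0"
  "sc M M Am = 0"
  "sc M M Bp = 0"
  "sc M M Bm = 0"
  "sc M M M = 0"
  by (simp_all add: sc_def brk_def)

lemma rmat_tab [simp]:
  "rmat a2 a3 a4 a5 c2 N N = 0"
  "rmat a2 a3 a4 a5 c2 N Ap = 0"
  "rmat a2 a3 a4 a5 c2 N Am = 0"
  "rmat a2 a3 a4 a5 c2 N Bp = a2"
  "rmat a2 a3 a4 a5 c2 N Bm = 0"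
  "rmat a2 a3 a4 a5 c2 N M = 0"
  "rmat a2 a3 a4 a5 c2 Ap N = 0"
  "rmat a2 a3 a4 a5 c2 Ap Ap = 0"
  "rmat a2 a3 a4 a5 c2 Ap Am = c2"
  "rmat a2 a3 a4 a5 c2 Ap Bp = a5"
  "rmat a2 a3 a4 a5 c2 Ap Bm = 0"
  "rmat a2 a3 a4 a5 c2 Ap M = a3"
  "rmat a2 a3 a4 a5 c2 Am N = 0"
  "rmat a2 a3 a4 a5 c2 Am Ap = - c2"
  "rmat a2 a3 a4 a5 c2 Am Am = 0"
  "rmat a2 a3 a4 a5 c2 Am Bp = 0"
  "rmat a2 a3 a4 a5 c2 Am Bm = 0"
  "rmat a2 a3 a4 a5 c2 Am M = 0"
  "rmat a2 a3 a4 a5 c2 Bp N = - a2"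
  "rmat a2 a3 a4 a5 c2 Bp Ap = - a5"
  "rmat a2 a3 a4 a5 c2 Bp Am = 0"
  "rmat a2 a3 a4 a5 c2 Bp Bp = 0"
  "rmat a2 a3 a4 a5 c2 Bp Bm = 0"
  "rmat a2 a3 a4 a5 c2 Bp M = a4"
  "rmat a2 a3 a4 a5 c2 Bm N = 0"
  "rmat a2 a3 a4 a5 c2 Bm Ap = 0"
  "rmat a2 a3 a4 a5 c2 Bm Am = 0"
  "rmat a2 a3 a4 a5 c2 Bm Bp = 0"
  "rmat a2 a3 a4 a5 c2 Bm Bm = 0"
  "rmat a2 a3 a4 a5 c2 Bm M = 0"
  "rmat a2 a3 a4 a5 c2 M N = 0"
  "rmat a2 a3 a4 a5 c2 M Ap = - a3"
  "rmat a2 a3 a4 a5 c2 M Am = 0"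
  "rmat a2 a3 a4 a5 c2 M Bp = - a4"
  "rmat a2 a3 a4 a5 c2 M Bm = 0"
  "rmat a2 a3 a4 a5 c2 M M = 0"
  by (simp_all add: rmat_def wedge_def e_def)


lemma schouten_red: "schouten r p q u =
   (\<Sum>i\<in>UNIV. \<Sum>k\<in>UNIV. r i q * r k u * sc i k p) +
   (\<Sum>j\<in>UNIV. \<Sum>k\<in>UNIV. r p j * r k u * sc j k q) +
   (\<Sum>j\<in>UNIV. \<Sum>l\<in>UNIV. r p j * r q l * sc j l u)"
  unfolding schouten_def e_def
  by (simp add: distrib_left sum.distrib mult.assoc)


lemma fwd:
  assumes LB: "lie_bialgebra \<delta>" and BP: "\<delta> (e Bp) = (\<lambda>i j. 0)"
  shows "\<exists>a2 a3 a4 a5 c2. a2 * a3 - a5 * c2 = 0 \<and> (\<forall>X. \<delta> X = ad2 X (rmat a2 a3 a4 a5 c2))"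
proof -
  have L: "linear_map \<delta>" and C: "cocycle \<delta>" and J: "dual_is_lie \<delta>"
    using LB unfolding lie_bialgebra_def by auto
  have anti: "\<And>k i j. \<delta> (e k) i j = - \<delta> (e k) j i"
    using J unfolding dual_is_lie_def by blast
  have jac: "\<And>i j m l. (\<Sum>k\<in>UNIV. \<delta> (e k) i j * \<delta> (e l) k m
                          + \<delta> (e k) j m * \<delta> (e l) k i
                          + \<delta> (e k) m i * \<delta> (e l) k j) = 0"
    using J unfolding dual_is_lie_def by blast
  have s_Ap_N_N: "\<delta> (e Ap) N N = 0"
    using coc_e[OF L C, of N Ap N N, unfolded sum_gb sc_def brk_def BP, simplified]  by linarith
  have s_N_N_N: "\<delta> (e N) N N = 0"
    using coc_e[OF L C, of N Ap N Ap, unfolded sum_gb sc_def brk_def BP, simplified]  by linarith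
  have s_Ap_N_Bp: "\<delta> (e Ap) N Bp = 0"
    using coc_e[OF L C, of N Ap N Bp, unfolded sum_gb sc_def brk_def BP, simplified]  by linarith
  have s_Ap_N_Bm: "\<delta> (e Ap) N Bm = 0"
    using coc_e[OF L C, of N Ap N Bm, unfolded sum_gb sc_def brk_def BP, simplified]  by linarith
  have s_N_Bm_Bp: "\<delta> (e N) Bm Bp = 0"
    using coc_e[OF L C, of N Ap Am Bp, unfolded sum_gb sc_def brk_def BP, simplified]  by linarith
  have s_Ap_Bp_N: "\<delta> (e Ap) Bp N = 0"
    using coc_e[OF L C, of N Ap Bp N, unfolded sum_gb sc_def brk_def BP, simplified]  by linarith
  have s_N_Bp_Bm: "\<delta> (e N) Bp Bm = 0"
    using coc_e[OF L C, of N Ap Bp Am, unfolded sum_gb sc_def brk_def BP, simplified]  by linarith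
  have s_Ap_Bp_Bp: "\<delta> (e Ap) Bp Bp = 0"
    using coc_e[OF L C, of N Ap Bp Bp, unfolded sum_gb sc_def brk_def BP, simplified]  by linarith
  have s_Ap_Bp_Bm: "\<delta> (e Ap) Bp Bm = 0"
    using coc_e[OF L C, of N Ap Bp Bm, unfolded sum_gb sc_def brk_def BP, simplified]  by linarith
  have s_Ap_Bm_N: "\<delta> (e Ap) Bm N = 0"
    using coc_e[OF L C, of N Ap Bm N, unfolded sum_gb sc_def brk_def BP, simplified]  by linarith
  have s_Ap_Bm_Bp: "\<delta> (e Ap) Bm Bp = 0"
    using coc_e[OF L C, of N Ap Bm Bp, unfolded sum_gb sc_def brk_def BP, simplified]  by linarith
  have s_Ap_Bm_Bm: "\<delta> (e Ap) Bm Bm = 0"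
    using coc_e[OF L C, of N Ap Bm Bm, unfolded sum_gb sc_def brk_def BP, simplified]  by linarith
  have s_Am_N_N: "\<delta> (e Am) N N = 0"
    using coc_e[OF L C, of N Am N N, unfolded sum_gb sc_def brk_def BP, simplified]  by linarith
  have s_Am_N_Bp: "\<delta> (e Am) N Bp = 0"
    using coc_e[OF L C, of N Am N Bp, unfolded sum_gb sc_def brk_def BP, simplified]  by linarith
  have s_Am_N_Bm: "\<delta> (e Am) N Bm = 0"
    using coc_e[OF L C, of N Am N Bm, unfolded sum_gb sc_def brk_def BP, simplified]  by linarith
  have s_Am_Bp_N: "\<delta> (e Am) Bp N = 0"
    using coc_e[OF L C, of N Am Bp N, unfolded sum_gb sc_def brk_def BP, simplified]  by linarith
  have s_Am_Bp_Bp: "\<delta> (e Am) Bp Bp = 0"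
    using coc_e[OF L C, of N Am Bp Bp, unfolded sum_gb sc_def brk_def BP, simplified]  by linarith
  have s_Am_Bp_Bm: "\<delta> (e Am) Bp Bm = 0"
    using coc_e[OF L C, of N Am Bp Bm, unfolded sum_gb sc_def brk_def BP, simplified]  by linarith
  have s_Am_Bm_N: "\<delta> (e Am) Bm N = 0"
    using coc_e[OF L C, of N Am Bm N, unfolded sum_gb sc_def brk_def BP, simplified]  by linarith
  have s_Am_Bm_Bp: "\<delta> (e Am) Bm Bp = 0"
    using coc_e[OF L C, of N Am Bm Bp, unfolded sum_gb sc_def brk_def BP, simplified]  by linarith
  have s_Am_Bm_Bm: "\<delta> (e Am) Bm Bm = 0"
    using coc_e[OF L C, of N Am Bm Bm, unfolded sum_gb sc_def brk_def BP, simplified]  by linarith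
  have s_N_N_M: "\<delta> (e N) N M = 0"
    using coc_e[OF L C, of N Bp Bp M, unfolded sum_gb sc_def brk_def BP, simplified] s_N_Bp_Bm by linarith
  have s_N_M_N: "\<delta> (e N) M N = 0"
    using coc_e[OF L C, of N Bp M Bp, unfolded sum_gb sc_def brk_def BP, simplified] s_N_Bm_Bp by linarith
  have s_Bm_Ap_Ap: "\<delta> (e Bm) Ap Ap = 0"
    using coc_e[OF L C, of N Bm Ap Ap, unfolded sum_gb sc_def brk_def BP, simplified]  by linarith
  have s_Bm_Ap_Bp: "\<delta> (e Bm) Ap Bp = 0"
    using coc_e[OF L C, of N Bm Ap Bp, unfolded sum_gb sc_def brk_def BP, simplified]  by linarith
  have s_Bm_Bp_Ap: "\<delta> (e Bm) Bp Ap = 0"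
    using coc_e[OF L C, of N Bm Bp Ap, unfolded sum_gb sc_def brk_def BP, simplified]  by linarith
  have s_Bm_Bp_Bp: "\<delta> (e Bm) Bp Bp = 0"
    using coc_e[OF L C, of N Bm Bp Bp, unfolded sum_gb sc_def brk_def BP, simplified]  by linarith
  have s_N_N_Ap: "\<delta> (e N) N Ap = ((1/2)) * (\<delta> (e Bm) Bm Ap)"
    using coc_e[OF L C, of N Bm Bm Ap, unfolded sum_gb sc_def brk_def BP, simplified]  by linarith
  have s_N_N_Bp: "\<delta> (e N) N Bp = (1) * (\<delta> (e Bm) Bm Bp)"
    using coc_e[OF L C, of N Bm Bm Bp, unfolded sum_gb sc_def brk_def BP, simplified]  by linarith
  have s_N_Bp_Ap: "\<delta> (e N) Bp Ap = ((3/2)) * (\<delta> (e Bm) M Ap)"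
    using coc_e[OF L C, of N Bm M Ap, unfolded sum_gb sc_def brk_def BP, simplified]  by linarith
  have s_M_N_Ap: "\<delta> (e M) N Ap = 0"
    using coc_e[OF L C, of N M N Ap, unfolded sum_gb sc_def brk_def BP, simplified]  by linarith
  have s_M_N_Am: "\<delta> (e M) N Am = 0"
    using coc_e[OF L C, of N M N Am, unfolded sum_gb sc_def brk_def BP, simplified]  by linarith
  have s_M_N_Bp: "\<delta> (e M) N Bp = 0"
    using coc_e[OF L C, of N M N Bp, unfolded sum_gb sc_def brk_def BP, simplified]  by linarith
  have s_M_N_Bm: "\<delta> (e M) N Bm = 0"
    using coc_e[OF L C, of N M N Bm, unfolded sum_gb sc_def brk_def BP, simplified]  by linarith
  have s_M_Ap_N: "\<delta> (e M) Ap N = 0"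
    using coc_e[OF L C, of N M Ap N, unfolded sum_gb sc_def brk_def BP, simplified]  by linarith
  have s_M_Ap_Ap: "\<delta> (e M) Ap Ap = 0"
    using coc_e[OF L C, of N M Ap Ap, unfolded sum_gb sc_def brk_def BP, simplified]  by linarith
  have s_M_Ap_Bp: "\<delta> (e M) Ap Bp = 0"
    using coc_e[OF L C, of N M Ap Bp, unfolded sum_gb sc_def brk_def BP, simplified]  by linarith
  have s_M_Ap_Bm: "\<delta> (e M) Ap Bm = 0"
    using coc_e[OF L C, of N M Ap Bm, unfolded sum_gb sc_def brk_def BP, simplified]  by linarith
  have s_M_Ap_M: "\<delta> (e M) Ap M = 0"
    using coc_e[OF L C, of N M Ap M, unfolded sum_gb sc_def brk_def BP, simplified]  by linarith
  have s_M_Am_N: "\<delta> (e M) Am N = 0"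
    using coc_e[OF L C, of N M Am N, unfolded sum_gb sc_def brk_def BP, simplified]  by linarith
  have s_M_Am_Am: "\<delta> (e M) Am Am = 0"
    using coc_e[OF L C, of N M Am Am, unfolded sum_gb sc_def brk_def BP, simplified]  by linarith
  have s_M_Am_Bp: "\<delta> (e M) Am Bp = 0"
    using coc_e[OF L C, of N M Am Bp, unfolded sum_gb sc_def brk_def BP, simplified]  by linarith
  have s_M_Am_Bm: "\<delta> (e M) Am Bm = 0"
    using coc_e[OF L C, of N M Am Bm, unfolded sum_gb sc_def brk_def BP, simplified]  by linarith
  have s_M_Am_M: "\<delta> (e M) Am M = 0"
    using coc_e[OF L C, of N M Am M, unfolded sum_gb sc_def brk_def BP, simplified]  by linarith
  have s_M_Bp_N: "\<delta> (e M) Bp N = 0"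
    using coc_e[OF L C, of N M Bp N, unfolded sum_gb sc_def brk_def BP, simplified]  by linarith
  have s_M_Bp_Ap: "\<delta> (e M) Bp Ap = 0"
    using coc_e[OF L C, of N M Bp Ap, unfolded sum_gb sc_def brk_def BP, simplified]  by linarith
  have s_M_Bp_Am: "\<delta> (e M) Bp Am = 0"
    using coc_e[OF L C, of N M Bp Am, unfolded sum_gb sc_def brk_def BP, simplified]  by linarith
  have s_M_Bp_Bp: "\<delta> (e M) Bp Bp = 0"
    using coc_e[OF L C, of N M Bp Bp, unfolded sum_gb sc_def brk_def BP, simplified]  by linarith
  have s_M_Bp_M: "\<delta> (e M) Bp M = 0"
    using coc_e[OF L C, of N M Bp M, unfolded sum_gb sc_def brk_def BP, simplified]  by linarith
  have s_M_Bm_N: "\<delta> (e M) Bm N = 0"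
    using coc_e[OF L C, of N M Bm N, unfolded sum_gb sc_def brk_def BP, simplified]  by linarith
  have s_M_Bm_Ap: "\<delta> (e M) Bm Ap = 0"
    using coc_e[OF L C, of N M Bm Ap, unfolded sum_gb sc_def brk_def BP, simplified]  by linarith
  have s_M_Bm_Am: "\<delta> (e M) Bm Am = 0"
    using coc_e[OF L C, of N M Bm Am, unfolded sum_gb sc_def brk_def BP, simplified]  by linarith
  have s_M_Bm_Bm: "\<delta> (e M) Bm Bm = 0"
    using coc_e[OF L C, of N M Bm Bm, unfolded sum_gb sc_def brk_def BP, simplified]  by linarith
  have s_M_Bm_M: "\<delta> (e M) Bm M = 0"
    using coc_e[OF L C, of N M Bm M, unfolded sum_gb sc_def brk_def BP, simplified]  by linarith
  have s_M_M_Ap: "\<delta> (e M) M Ap = 0"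
    using coc_e[OF L C, of N M M Ap, unfolded sum_gb sc_def brk_def BP, simplified]  by linarith
  have s_M_M_Am: "\<delta> (e M) M Am = 0"
    using coc_e[OF L C, of N M M Am, unfolded sum_gb sc_def brk_def BP, simplified]  by linarith
  have s_M_M_Bp: "\<delta> (e M) M Bp = 0"
    using coc_e[OF L C, of N M M Bp, unfolded sum_gb sc_def brk_def BP, simplified]  by linarith
  have s_M_M_Bm: "\<delta> (e M) M Bm = 0"
    using coc_e[OF L C, of N M M Bm, unfolded sum_gb sc_def brk_def BP, simplified]  by linarith
  have s_Ap_Ap_Bp: "\<delta> (e Ap) Ap Bp = ((-1/2)) * (\<delta> (e Bm) Bm Bp)"
    using coc_e[OF L C, of Ap N Ap Bp, unfolded sum_gb sc_def brk_def BP, simplified] s_N_N_Bp by linarith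
  have s_N_Ap_Am: "\<delta> (e N) Ap Am = 0"
    using coc_e[OF L C, of Ap N Ap M, unfolded sum_gb sc_def brk_def BP, simplified] s_N_N_M by linarith
  have s_N_Am_Ap: "\<delta> (e N) Am Ap = 0"
    using coc_e[OF L C, of Ap N M Ap, unfolded sum_gb sc_def brk_def BP, simplified] s_N_M_N by linarith
  have s_M_N_N: "\<delta> (e M) N N = 0"
    using coc_e[OF L C, of Ap Am N N, unfolded sum_gb sc_def brk_def BP, simplified]  by linarith
  have s_M_Bp_Bm: "\<delta> (e M) Bp Bm = 0"
    using coc_e[OF L C, of Ap Am Bp Bm, unfolded sum_gb sc_def brk_def BP, simplified]  by linarith
  have s_M_Bm_Bp: "\<delta> (e M) Bm Bp = 0"
    using coc_e[OF L C, of Ap Am Bm Bp, unfolded sum_gb sc_def brk_def BP, simplified]  by linarith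
  have s_Am_Am_Bp: "\<delta> (e Am) Am Bp = ((1/2)) * (\<delta> (e Bm) Bm Bp)"
    using coc_e[OF L C, of Ap Am M Bp, unfolded sum_gb sc_def brk_def BP, simplified] s_M_M_Bp s_Ap_Ap_Bp by linarith
  have s_Am_N_Ap: "\<delta> (e Am) N Ap = (1) * (\<delta> (e Bm) Bm Bp)"
    using coc_e[OF L C, of Am N N Ap, unfolded sum_gb sc_def brk_def BP, simplified] s_N_N_Bp by linarith
  have s_Am_N_M: "\<delta> (e Am) N M = ((1/2)) * (\<delta> (e Bm) Bm Ap)"
    using coc_e[OF L C, of Am N N M, unfolded sum_gb sc_def brk_def BP, simplified] s_N_N_Ap by linarith
  have s_Am_Bp_M: "\<delta> (e Am) Bp M = ((1/2)) * (\<delta> (e Bm) M Ap)"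
    using coc_e[OF L C, of Am N Bp M, unfolded sum_gb sc_def brk_def BP, simplified] s_N_Bp_Ap by linarith
  have s_Bm_N_Ap: "\<delta> (e Bm) N Ap = (2) * (\<delta> (e Bm) M Ap)"
    using coc_e[OF L C, of Am Bm N M, unfolded sum_gb sc_def brk_def BP, simplified] s_Am_Bp_M s_Am_N_Bp by linarith
  have s_Bm_Bp_Am: "\<delta> (e Bm) Bp Am = (1) * (\<delta> (e Bm) M Ap)"
    using coc_e[OF L C, of Bp Bm Bp Ap, unfolded sum_gb sc_def brk_def BP, simplified] s_N_Bp_Ap s_M_Bp_Ap s_Bm_N_Ap by linarith
  have s_M_N_M: "\<delta> (e M) N M = 0"
    using coc_e[OF L C, of Bp M Bp M, unfolded sum_gb sc_def brk_def BP, simplified] s_M_Bp_Bm by linarith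
  have s_M_M_N: "\<delta> (e M) M N = 0"
    using coc_e[OF L C, of Bp M M Bp, unfolded sum_gb sc_def brk_def BP, simplified] s_M_Bm_Bp by linarith
  have s_M_Ap_Am: "\<delta> (e M) Ap Am = 0"
    using coc_e[OF L C, of M Ap Ap M, unfolded sum_gb sc_def brk_def BP, simplified] s_M_N_M by linarith
  have s_M_Am_Ap: "\<delta> (e M) Am Ap = 0"
    using coc_e[OF L C, of M Ap M Ap, unfolded sum_gb sc_def brk_def BP, simplified] s_M_M_N by linarith
  have s_N_Ap_N: "\<delta> (e N) Ap N = ((-1/2)) * (\<delta> (e Bm) Bm Ap)"
    using anti[of N N Ap] s_N_N_Ap by linarith
  have s_N_Bp_N: "\<delta> (e N) Bp N = (-1) * (\<delta> (e Bm) Bm Bp)"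
    using anti[of N N Bp] s_N_N_Bp by linarith
  have s_N_Ap_Ap: "\<delta> (e N) Ap Ap = 0"
    using anti[of N Ap Ap]  by linarith
  have s_N_Ap_Bp: "\<delta> (e N) Ap Bp = ((-3/2)) * (\<delta> (e Bm) M Ap)"
    using anti[of N Ap Bp] s_N_Bp_Ap by linarith
  have s_N_Am_Am: "\<delta> (e N) Am Am = 0"
    using anti[of N Am Am]  by linarith
  have s_N_Bp_Bp: "\<delta> (e N) Bp Bp = 0"
    using anti[of N Bp Bp]  by linarith
  have s_N_Bm_Bm: "\<delta> (e N) Bm Bm = 0"
    using anti[of N Bm Bm]  by linarith
  have s_N_M_M: "\<delta> (e N) M M = 0"
    using anti[of N M M]  by linarith
  have s_Ap_Ap_Ap: "\<delta> (e Ap) Ap Ap = 0"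
    using anti[of Ap Ap Ap]  by linarith
  have s_Ap_Bp_Ap: "\<delta> (e Ap) Bp Ap = ((1/2)) * (\<delta> (e Bm) Bm Bp)"
    using anti[of Ap Ap Bp] s_Ap_Ap_Bp by linarith
  have s_Ap_Am_Am: "\<delta> (e Ap) Am Am = 0"
    using anti[of Ap Am Am]  by linarith
  have s_Ap_M_M: "\<delta> (e Ap) M M = 0"
    using anti[of Ap M M]  by linarith
  have s_Am_Ap_N: "\<delta> (e Am) Ap N = (-1) * (\<delta> (e Bm) Bm Bp)"
    using anti[of Am N Ap] s_Am_N_Ap by linarith
  have s_Am_M_N: "\<delta> (e Am) M N = ((-1/2)) * (\<delta> (e Bm) Bm Ap)"
    using anti[of Am N M] s_Am_N_M by linarith
  have s_Am_Ap_Ap: "\<delta> (e Am) Ap Ap = 0"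
    using anti[of Am Ap Ap]  by linarith
  have s_Am_Am_Am: "\<delta> (e Am) Am Am = 0"
    using anti[of Am Am Am]  by linarith
  have s_Am_Bp_Am: "\<delta> (e Am) Bp Am = ((-1/2)) * (\<delta> (e Bm) Bm Bp)"
    using anti[of Am Am Bp] s_Am_Am_Bp by linarith
  have s_Am_Am_M: "\<delta> (e Am) Am M = (-1) * (\<delta> (e Am) M Am)"
    using anti[of Am Am M]  by linarith
  have s_Am_M_Bp: "\<delta> (e Am) M Bp = ((-1/2)) * (\<delta> (e Bm) M Ap)"
    using anti[of Am Bp M] s_Am_Bp_M by linarith
  have s_Am_M_M: "\<delta> (e Am) M M = 0"
    using anti[of Am M M]  by linarith
  have s_Bm_N_N: "\<delta> (e Bm) N N = 0"
    using anti[of Bm N N]  by linarith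
  have s_Bm_Ap_N: "\<delta> (e Bm) Ap N = (-2) * (\<delta> (e Bm) M Ap)"
    using anti[of Bm N Ap] s_Bm_N_Ap by linarith
  have s_Bm_N_M: "\<delta> (e Bm) N M = (-1) * (\<delta> (e Bm) M N)"
    using anti[of Bm N M]  by linarith
  have s_Bm_Ap_Bm: "\<delta> (e Bm) Ap Bm = (-1) * (\<delta> (e Bm) Bm Ap)"
    using anti[of Bm Ap Bm]  by linarith
  have s_Bm_Ap_M: "\<delta> (e Bm) Ap M = (-1) * (\<delta> (e Bm) M Ap)"
    using anti[of Bm Ap M]  by linarith
  have s_Bm_Am_Am: "\<delta> (e Bm) Am Am = 0"
    using anti[of Bm Am Am]  by linarith
  have s_Bm_Am_Bp: "\<delta> (e Bm) Am Bp = (-1) * (\<delta> (e Bm) M Ap)"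
    using anti[of Bm Am Bp] s_Bm_Bp_Am by linarith
  have s_Bm_Am_M: "\<delta> (e Bm) Am M = (-1) * (\<delta> (e Bm) M Am)"
    using anti[of Bm Am M]  by linarith
  have s_Bm_Bp_Bm: "\<delta> (e Bm) Bp Bm = (-1) * (\<delta> (e Bm) Bm Bp)"
    using anti[of Bm Bp Bm]  by linarith
  have s_Bm_Bm_Bm: "\<delta> (e Bm) Bm Bm = 0"
    using anti[of Bm Bm Bm]  by linarith
  have s_Bm_M_M: "\<delta> (e Bm) M M = 0"
    using anti[of Bm M M]  by linarith
  have s_M_M_M: "\<delta> (e M) M M = 0"
    using anti[of M M M]  by linarith
  have s_Ap_Am_Bm: "\<delta> (e Ap) Am Bm = 0"
    using coc_e[OF L C, of N Ap Am Bm, unfolded sum_gb sc_def brk_def BP, simplified] s_N_Bm_Bm by linarith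
  have s_Ap_Bm_Am: "\<delta> (e Ap) Bm Am = 0"
    using coc_e[OF L C, of N Ap Bm Am, unfolded sum_gb sc_def brk_def BP, simplified] s_N_Bm_Bm by linarith
  have s_Am_Ap_Bp: "\<delta> (e Am) Ap Bp = 0"
    using coc_e[OF L C, of N Am Ap Bp, unfolded sum_gb sc_def brk_def BP, simplified] s_N_Bp_Bp by linarith
  have s_Am_Bp_Ap: "\<delta> (e Am) Bp Ap = 0"
    using coc_e[OF L C, of N Am Bp Ap, unfolded sum_gb sc_def brk_def BP, simplified] s_N_Bp_Bp by linarith
  have s_N_Bm_Am: "\<delta> (e N) Bm Am = 0"
    using coc_e[OF L C, of N Bp N Am, unfolded sum_gb sc_def brk_def BP, simplified]  by linarith
  have s_N_Am_Bp: "\<delta> (e N) Am Bp = ((1/2)) * (\<delta> (e Bm) Bm Ap)"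
    using coc_e[OF L C, of N Bp Ap Bp, unfolded sum_gb sc_def brk_def BP, simplified] s_N_Ap_N by linarith
  have s_N_Am_Bm: "\<delta> (e N) Am Bm = 0"
    using coc_e[OF L C, of N Bp Ap Bm, unfolded sum_gb sc_def brk_def BP, simplified]  by linarith
  have s_N_Am_N: "\<delta> (e N) Am N = 0"
    using coc_e[OF L C, of N Bp Am Bp, unfolded sum_gb sc_def brk_def BP, simplified]  by linarith
  have s_N_Bp_Am: "\<delta> (e N) Bp Am = ((-1/2)) * (\<delta> (e Bm) Bm Ap)"
    using coc_e[OF L C, of N Bp Bp Ap, unfolded sum_gb sc_def brk_def BP, simplified] s_N_N_Ap by linarith
  have s_N_N_Am: "\<delta> (e N) N Am = 0"
    using coc_e[OF L C, of N Bp Bp Am, unfolded sum_gb sc_def brk_def BP, simplified]  by linarith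
  have s_N_N_Bm: "\<delta> (e N) N Bm = 0"
    using coc_e[OF L C, of N Bp Bp Bm, unfolded sum_gb sc_def brk_def BP, simplified]  by linarith
  have s_N_Bm_N: "\<delta> (e N) Bm N = 0"
    using coc_e[OF L C, of N Bp Bm Bp, unfolded sum_gb sc_def brk_def BP, simplified]  by linarith
  have s_N_M_Bm: "\<delta> (e N) M Bm = 0"
    using coc_e[OF L C, of N Bp M N, unfolded sum_gb sc_def brk_def BP, simplified] s_N_Bm_N by linarith
  have s_N_Bm_M: "\<delta> (e N) Bm M = 0"
    using coc_e[OF L C, of N Bp M M, unfolded sum_gb sc_def brk_def BP, simplified] s_N_M_Bm by linarith
  have s_Bm_N_Am: "\<delta> (e Bm) N Am = (-1) * (\<delta> (e Bm) Bm Ap)"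
    using coc_e[OF L C, of N Bm N Am, unfolded sum_gb sc_def brk_def BP, simplified] s_N_N_Ap s_N_Bp_Am by linarith
  have s_Bm_N_Bp: "\<delta> (e Bm) N Bp = 0"
    using coc_e[OF L C, of N Bm N Bp, unfolded sum_gb sc_def brk_def BP, simplified] s_N_Bp_Bp by linarith
  have s_N_Bp_M: "\<delta> (e N) Bp M = ((-1/2)) * (\<delta> (e Bm) Bm Bp) + ((-1/2)) * (\<delta> (e Bm) M N)"
    using coc_e[OF L C, of N Bm N M, unfolded sum_gb sc_def brk_def BP, simplified] s_Bm_N_M s_N_N_Bp by linarith
  have s_Bm_Ap_Am: "\<delta> (e Bm) Ap Am = 0"
    using coc_e[OF L C, of N Bm Ap Am, unfolded sum_gb sc_def brk_def BP, simplified] s_N_Ap_Ap by linarith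
  have s_Bm_Am_N: "\<delta> (e Bm) Am N = (1) * (\<delta> (e Bm) Bm Ap)"
    using coc_e[OF L C, of N Bm Am N, unfolded sum_gb sc_def brk_def BP, simplified] s_N_Ap_N s_N_Am_Bp by linarith
  have s_Bm_Am_Ap: "\<delta> (e Bm) Am Ap = 0"
    using coc_e[OF L C, of N Bm Am Ap, unfolded sum_gb sc_def brk_def BP, simplified] s_N_Ap_Ap by linarith
  have s_N_Ap_M: "\<delta> (e N) Ap M = ((-1/2)) * (\<delta> (e Bm) Bm Ap) + ((-1/2)) * (\<delta> (e Bm) M Am)"
    using coc_e[OF L C, of N Bm Am M, unfolded sum_gb sc_def brk_def BP, simplified] s_Bm_Am_M s_N_Am_Bp by linarith
  have s_Bm_Bp_N: "\<delta> (e Bm) Bp N = 0"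
    using coc_e[OF L C, of N Bm Bp N, unfolded sum_gb sc_def brk_def BP, simplified] s_N_Bp_Bp by linarith
  have s_Bm_Bp_M: "\<delta> (e Bm) Bp M = 0"
    using coc_e[OF L C, of N Bm Bp M, unfolded sum_gb sc_def brk_def BP, simplified] s_N_Bp_Bp by linarith
  have s_N_M_Bp: "\<delta> (e N) M Bp = ((1/2)) * (\<delta> (e Bm) Bm Bp) + ((1/2)) * (\<delta> (e Bm) M N)"
    using coc_e[OF L C, of N Bm M N, unfolded sum_gb sc_def brk_def BP, simplified] s_N_Bp_N by linarith
  have s_N_M_Ap: "\<delta> (e N) M Ap = ((1/2)) * (\<delta> (e Bm) Bm Ap) + ((1/2)) * (\<delta> (e Bm) M Am)"
    using coc_e[OF L C, of N Bm M Am, unfolded sum_gb sc_def brk_def BP, simplified] s_N_Bp_Am by linarith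
  have s_Bm_M_Bp: "\<delta> (e Bm) M Bp = 0"
    using coc_e[OF L C, of N Bm M Bp, unfolded sum_gb sc_def brk_def BP, simplified] s_N_Bp_Bp by linarith
  have s_Ap_N_Am: "\<delta> (e Ap) N Am = 0"
    using coc_e[OF L C, of Ap N N Am, unfolded sum_gb sc_def brk_def BP, simplified] s_N_N_Bm by linarith
  have s_Ap_N_M: "\<delta> (e Ap) N M = 0"
    using coc_e[OF L C, of Ap N N M, unfolded sum_gb sc_def brk_def BP, simplified] s_N_N_Am by linarith
  have s_Ap_Ap_Bm: "\<delta> (e Ap) Ap Bm = 0"
    using coc_e[OF L C, of Ap N Ap Bm, unfolded sum_gb sc_def brk_def BP, simplified] s_N_N_Bm by linarith
  have s_Ap_Am_N: "\<delta> (e Ap) Am N = 0"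
    using coc_e[OF L C, of Ap N Am N, unfolded sum_gb sc_def brk_def BP, simplified] s_N_Bm_N by linarith
  have s_Ap_Am_M: "\<delta> (e Ap) Am M = 0"
    using coc_e[OF L C, of Ap N Am M, unfolded sum_gb sc_def brk_def BP, simplified] s_N_Am_Am s_N_Bm_M by linarith
  have s_Ap_Bp_M: "\<delta> (e Ap) Bp M = ((1/2)) * (\<delta> (e Bm) Bm Ap)"
    using coc_e[OF L C, of Ap N Bp M, unfolded sum_gb sc_def brk_def BP, simplified] s_N_Bp_Am by linarith
  have s_Ap_Bm_Ap: "\<delta> (e Ap) Bm Ap = 0"
    using coc_e[OF L C, of Ap N Bm Ap, unfolded sum_gb sc_def brk_def BP, simplified] s_N_Bm_N by linarith
  have s_Ap_Bm_M: "\<delta> (e Ap) Bm M = 0"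
    using coc_e[OF L C, of Ap N Bm M, unfolded sum_gb sc_def brk_def BP, simplified] s_N_Bm_Am by linarith
  have s_Ap_M_N: "\<delta> (e Ap) M N = 0"
    using coc_e[OF L C, of Ap N M N, unfolded sum_gb sc_def brk_def BP, simplified] s_N_Am_N by linarith
  have s_Ap_M_Am: "\<delta> (e Ap) M Am = 0"
    using coc_e[OF L C, of Ap N M Am, unfolded sum_gb sc_def brk_def BP, simplified] s_N_Am_Am s_N_M_Bm by linarith
  have s_Ap_M_Bp: "\<delta> (e Ap) M Bp = ((-1/2)) * (\<delta> (e Bm) Bm Ap)"
    using coc_e[OF L C, of Ap N M Bp, unfolded sum_gb sc_def brk_def BP, simplified] s_N_Am_Bp by linarith
  have s_Ap_M_Bm: "\<delta> (e Ap) M Bm = 0"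
    using coc_e[OF L C, of Ap N M Bm, unfolded sum_gb sc_def brk_def BP, simplified] s_N_Am_Bm by linarith
  have s_Am_Ap_Am: "\<delta> (e Am) Ap Am = ((-3/2)) * (\<delta> (e Bm) Bm Ap)"
    using coc_e[OF L C, of Ap Am Ap M, unfolded sum_gb sc_def brk_def BP, simplified] s_M_Ap_M s_Am_N_M s_Ap_Ap_Ap s_Ap_Bp_M by linarith
  have s_Am_Bm_Am: "\<delta> (e Am) Bm Am = 0"
    using coc_e[OF L C, of Ap Am Bm M, unfolded sum_gb sc_def brk_def BP, simplified] s_M_Bm_M s_Ap_Bm_Ap by linarith
  have s_Am_Am_Ap: "\<delta> (e Am) Am Ap = ((3/2)) * (\<delta> (e Bm) Bm Ap)"
    using coc_e[OF L C, of Ap Am M Ap, unfolded sum_gb sc_def brk_def BP, simplified] s_M_M_Ap s_Am_M_N s_Ap_Ap_Ap s_Ap_M_Bp by linarith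
  have s_Am_Am_Bm: "\<delta> (e Am) Am Bm = 0"
    using coc_e[OF L C, of Ap Am M Bm, unfolded sum_gb sc_def brk_def BP, simplified] s_M_M_Bm s_Ap_Ap_Bm by linarith
  have s_Am_Ap_M: "\<delta> (e Am) Ap M = ((-1/2)) * (\<delta> (e Bm) Bm Bp) + ((-1/2)) * (\<delta> (e Bm) M N)"
    using coc_e[OF L C, of Ap Bm Ap M, unfolded sum_gb sc_def brk_def BP, simplified] s_Bm_N_M s_Bm_Ap_Am s_Ap_Ap_Bp by linarith
  have s_Am_M_Ap: "\<delta> (e Am) M Ap = ((1/2)) * (\<delta> (e Bm) Bm Bp) + ((1/2)) * (\<delta> (e Bm) M N)"
    using coc_e[OF L C, of Ap Bm M Ap, unfolded sum_gb sc_def brk_def BP, simplified] s_Bm_Am_Ap s_Ap_Bp_Ap by linarith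
  have s_Am_Bm_M: "\<delta> (e Am) Bm M = 0"
    using coc_e[OF L C, of Am Bp N M, unfolded sum_gb sc_def brk_def BP, simplified] s_Ap_N_M s_Am_N_Bm by linarith
  have s_Ap_Ap_Am: "\<delta> (e Ap) Ap Am = 0"
    using coc_e[OF L C, of Am Bp Ap Am, unfolded sum_gb sc_def brk_def BP, simplified] s_Am_Am_Am by linarith
  have s_Ap_Am_Ap: "\<delta> (e Ap) Am Ap = 0"
    using coc_e[OF L C, of Am Bp Am Ap, unfolded sum_gb sc_def brk_def BP, simplified] s_Am_Am_Am by linarith
  have s_Am_M_Bm: "\<delta> (e Am) M Bm = 0"
    using coc_e[OF L C, of Am Bp M N, unfolded sum_gb sc_def brk_def BP, simplified] s_Ap_M_N s_Am_Bm_N by linarith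
  have s_N_Bm_Ap: "\<delta> (e N) Bm Ap = 0"
    using coc_e[OF L C, of Bp N N Ap, unfolded sum_gb sc_def brk_def BP, simplified] s_N_N_Am by linarith
  have s_N_Ap_Bm: "\<delta> (e N) Ap Bm = 0"
    using coc_e[OF L C, of Bp N Ap N, unfolded sum_gb sc_def brk_def BP, simplified] s_N_Am_N by linarith
  have s_N_Am_M: "\<delta> (e N) Am M = 0"
    using coc_e[OF L C, of Bp N Ap M, unfolded sum_gb sc_def brk_def BP, simplified] s_N_Ap_Bm by linarith
  have s_N_M_Am: "\<delta> (e N) M Am = 0"
    using coc_e[OF L C, of Bp N M Ap, unfolded sum_gb sc_def brk_def BP, simplified] s_N_Bm_Ap by linarith
  have s_Bm_Bm_Am: "\<delta> (e Bm) Bm Am = 0"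
    using coc_e[OF L C, of Bp Bm N Am, unfolded sum_gb sc_def brk_def BP, simplified] s_N_N_Am s_M_N_Am by linarith
  have s_Bm_Am_Bm: "\<delta> (e Bm) Am Bm = 0"
    using coc_e[OF L C, of Bp Bm Ap Bm, unfolded sum_gb sc_def brk_def BP, simplified] s_N_Ap_Bm s_M_Ap_Bm by linarith
  have s_Bm_N_Bm: "\<delta> (e Bm) N Bm = 0"
    using coc_e[OF L C, of Bp Bm Bp Bm, unfolded sum_gb sc_def brk_def BP, simplified] s_N_Bp_Bm s_M_Bp_Bm by linarith
  have s_Bm_Bm_N: "\<delta> (e Bm) Bm N = 0"
    using coc_e[OF L C, of Bp Bm Bm Bp, unfolded sum_gb sc_def brk_def BP, simplified] s_N_Bm_Bp s_M_Bm_Bp by linarith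
  have s_Bm_M_Bm: "\<delta> (e Bm) M Bm = 0"
    using coc_e[OF L C, of Bp Bm M N, unfolded sum_gb sc_def brk_def BP, simplified] s_N_M_N s_M_M_N s_Bm_Bm_N by linarith
  have s_Bm_Bm_M: "\<delta> (e Bm) Bm M = 0"
    using coc_e[OF L C, of Bp Bm M M, unfolded sum_gb sc_def brk_def BP, simplified] s_N_M_M s_M_M_M s_Bm_M_Bm by linarith
  have s_Ap_N_Ap: "\<delta> (e Ap) N Ap = 0"
    using coc_e[OF L C, of Ap Bp Ap Bp, unfolded sum_gb sc_def brk_def BP, simplified] coc_e[OF L C, of Ap Bm Ap Bm, unfolded sum_gb sc_def brk_def BP, simplified] coc_e[OF L C, of Ap Bp Bp Ap, unfolded sum_gb sc_def brk_def BP, simplified] coc_e[OF L C, of Ap Am Ap Am, unfolded sum_gb sc_def brk_def BP, simplified] coc_e[OF L C, of Ap Am N M, unfolded sum_gb sc_def brk_def BP, simplified] coc_e[OF L C, of Ap Bm M Am, unfolded sum_gb sc_def brk_def BP, simplified] coc_e[OF L C, of Ap Bm Am M, unfolded sum_gb sc_def brk_def BP, simplified] coc_e[OF L C, of Ap Am M M, unfolded sum_gb sc_def brk_def BP, simplified] s_Am_Am_M s_Bm_N_Bm s_Bm_Am_Am s_Bm_Bm_M s_Bm_M_Bm s_M_N_M s_M_Ap_Am s_M_M_M by linarith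
  have s_Ap_Ap_N: "\<delta> (e Ap) Ap N = 0"
    using coc_e[OF L C, of Ap Bm Ap Bm, unfolded sum_gb sc_def brk_def BP, simplified] coc_e[OF L C, of Ap Bp Bp Ap, unfolded sum_gb sc_def brk_def BP, simplified] coc_e[OF L C, of Ap Bp Ap Bp, unfolded sum_gb sc_def brk_def BP, simplified] coc_e[OF L C, of Ap Am Ap Am, unfolded sum_gb sc_def brk_def BP, simplified] coc_e[OF L C, of Ap Am N M, unfolded sum_gb sc_def brk_def BP, simplified] coc_e[OF L C, of Ap Bm M Am, unfolded sum_gb sc_def brk_def BP, simplified] coc_e[OF L C, of Ap Bm Am M, unfolded sum_gb sc_def brk_def BP, simplified] coc_e[OF L C, of Ap Am M M, unfolded sum_gb sc_def brk_def BP, simplified] s_Ap_N_Ap s_Am_Am_M s_Bm_N_Bm s_Bm_Am_Am s_Bm_Bm_M s_Bm_M_Bm s_M_N_M s_M_Ap_Am s_M_M_M by linarith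
  have s_Ap_Ap_M: "\<delta> (e Ap) Ap M = (-1) * (\<delta> (e Am) M Am)"
    using coc_e[OF L C, of Ap Bm Am M, unfolded sum_gb sc_def brk_def BP, simplified] coc_e[OF L C, of Ap Bm Ap Bm, unfolded sum_gb sc_def brk_def BP, simplified] coc_e[OF L C, of Ap Bp Bp Ap, unfolded sum_gb sc_def brk_def BP, simplified] coc_e[OF L C, of Ap Am Ap Am, unfolded sum_gb sc_def brk_def BP, simplified] coc_e[OF L C, of Ap Am N M, unfolded sum_gb sc_def brk_def BP, simplified] coc_e[OF L C, of Ap Bm M Am, unfolded sum_gb sc_def brk_def BP, simplified] coc_e[OF L C, of Ap Bp Ap Bp, unfolded sum_gb sc_def brk_def BP, simplified] coc_e[OF L C, of Ap Am M M, unfolded sum_gb sc_def brk_def BP, simplified] s_Ap_N_Ap s_Ap_Ap_N s_Am_Am_M s_Bm_N_Bm s_Bm_Am_Am s_Bm_Bm_M s_Bm_M_Bm s_M_N_M s_M_Ap_Am s_M_M_M by linarith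
  have s_Ap_Am_Bp: "\<delta> (e Ap) Am Bp = 0"
    using coc_e[OF L C, of Ap Bm Ap Bm, unfolded sum_gb sc_def brk_def BP, simplified] coc_e[OF L C, of Ap Bp Bp Ap, unfolded sum_gb sc_def brk_def BP, simplified] coc_e[OF L C, of Ap Am Ap Am, unfolded sum_gb sc_def brk_def BP, simplified] coc_e[OF L C, of Ap Am N M, unfolded sum_gb sc_def brk_def BP, simplified] coc_e[OF L C, of Ap Bm M Am, unfolded sum_gb sc_def brk_def BP, simplified] coc_e[OF L C, of Ap Bp Ap Bp, unfolded sum_gb sc_def brk_def BP, simplified] coc_e[OF L C, of Ap Bm Am M, unfolded sum_gb sc_def brk_def BP, simplified] coc_e[OF L C, of Ap Am M M, unfolded sum_gb sc_def brk_def BP, simplified] s_Ap_N_Ap s_Ap_Ap_N s_Ap_Ap_M s_Am_Am_M s_Bm_N_Bm s_Bm_Am_Am s_Bm_Bm_M s_Bm_M_Bm s_M_N_M s_M_Ap_Am s_M_M_M by linarith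
  have s_Ap_Bp_Am: "\<delta> (e Ap) Bp Am = 0"
    using coc_e[OF L C, of Ap Bp Ap Bp, unfolded sum_gb sc_def brk_def BP, simplified] coc_e[OF L C, of Ap Bm Ap Bm, unfolded sum_gb sc_def brk_def BP, simplified] coc_e[OF L C, of Ap Am Ap Am, unfolded sum_gb sc_def brk_def BP, simplified] coc_e[OF L C, of Ap Am N M, unfolded sum_gb sc_def brk_def BP, simplified] coc_e[OF L C, of Ap Bm M Am, unfolded sum_gb sc_def brk_def BP, simplified] coc_e[OF L C, of Ap Bm Am M, unfolded sum_gb sc_def brk_def BP, simplified] coc_e[OF L C, of Ap Bp Bp Ap, unfolded sum_gb sc_def brk_def BP, simplified] coc_e[OF L C, of Ap Am M M, unfolded sum_gb sc_def brk_def BP, simplified] s_Ap_N_Ap s_Ap_Ap_N s_Ap_Ap_M s_Ap_Am_Bp s_Am_Am_M s_Bm_N_Bm s_Bm_Am_Am s_Bm_Bm_M s_Bm_M_Bm s_M_N_M s_M_Ap_Am s_M_M_M by linarith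
  have s_Ap_M_Ap: "\<delta> (e Ap) M Ap = (1) * (\<delta> (e Am) M Am)"
    using coc_e[OF L C, of Ap Bm Am M, unfolded sum_gb sc_def brk_def BP, simplified] coc_e[OF L C, of Ap Bm Ap Bm, unfolded sum_gb sc_def brk_def BP, simplified] coc_e[OF L C, of Ap Bp Bp Ap, unfolded sum_gb sc_def brk_def BP, simplified] coc_e[OF L C, of Ap Am Ap Am, unfolded sum_gb sc_def brk_def BP, simplified] coc_e[OF L C, of Ap Am N M, unfolded sum_gb sc_def brk_def BP, simplified] coc_e[OF L C, of Ap Am M M, unfolded sum_gb sc_def brk_def BP, simplified] coc_e[OF L C, of Ap Bm M Am, unfolded sum_gb sc_def brk_def BP, simplified] coc_e[OF L C, of Ap Bp Ap Bp, unfolded sum_gb sc_def brk_def BP, simplified] s_Ap_N_Ap s_Ap_Ap_N s_Ap_Ap_M s_Ap_Am_Bp s_Ap_Bp_Am s_Am_Am_M s_Bm_N_Bm s_Bm_Am_Am s_Bm_Bm_M s_Bm_M_Bm s_M_N_M s_M_Ap_Am s_M_M_M by linarith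
  have s_Am_N_Am: "\<delta> (e Am) N Am = 0"
    using coc_e[OF L C, of Ap Bp Ap Bp, unfolded sum_gb sc_def brk_def BP, simplified] coc_e[OF L C, of Ap Am N M, unfolded sum_gb sc_def brk_def BP, simplified] coc_e[OF L C, of Ap Bm Ap Bm, unfolded sum_gb sc_def brk_def BP, simplified] coc_e[OF L C, of Ap Bp Bp Ap, unfolded sum_gb sc_def brk_def BP, simplified] coc_e[OF L C, of Ap Am Ap Am, unfolded sum_gb sc_def brk_def BP, simplified] coc_e[OF L C, of Ap Bm M Am, unfolded sum_gb sc_def brk_def BP, simplified] coc_e[OF L C, of Ap Bm Am M, unfolded sum_gb sc_def brk_def BP, simplified] coc_e[OF L C, of Ap Am M M, unfolded sum_gb sc_def brk_def BP, simplified] s_Ap_N_Ap s_Ap_Ap_N s_Ap_Ap_M s_Ap_Am_Bp s_Ap_Bp_Am s_Ap_M_Ap s_Am_Am_M s_Bm_N_Bm s_Bm_Am_Am s_Bm_Bm_M s_Bm_M_Bm s_M_N_M s_M_Ap_Am s_M_M_M by linarith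
  have s_Am_Ap_Bm: "\<delta> (e Am) Ap Bm = 0"
    using coc_e[OF L C, of Ap Bp Bp Ap, unfolded sum_gb sc_def brk_def BP, simplified] coc_e[OF L C, of Ap Bp Ap Bp, unfolded sum_gb sc_def brk_def BP, simplified] coc_e[OF L C, of Ap Am Ap Am, unfolded sum_gb sc_def brk_def BP, simplified] coc_e[OF L C, of Ap Am N M, unfolded sum_gb sc_def brk_def BP, simplified] coc_e[OF L C, of Ap Bm Ap Bm, unfolded sum_gb sc_def brk_def BP, simplified] coc_e[OF L C, of Ap Bm M Am, unfolded sum_gb sc_def brk_def BP, simplified] coc_e[OF L C, of Ap Bm Am M, unfolded sum_gb sc_def brk_def BP, simplified] coc_e[OF L C, of Ap Am M M, unfolded sum_gb sc_def brk_def BP, simplified] s_Ap_N_Ap s_Ap_Ap_N s_Ap_Ap_M s_Ap_Am_Bp s_Ap_Bp_Am s_Ap_M_Ap s_Am_N_Am s_Am_Am_M s_Bm_N_Bm s_Bm_Am_Am s_Bm_Bm_M s_Bm_M_Bm s_M_N_M s_M_Ap_Am s_M_M_M by linarith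
  have s_Am_Am_N: "\<delta> (e Am) Am N = 0"
    using coc_e[OF L C, of Ap Bm Ap Bm, unfolded sum_gb sc_def brk_def BP, simplified] coc_e[OF L C, of Ap Am M N, unfolded sum_gb sc_def brk_def BP, simplified] coc_e[OF L C, of Ap Bp Bp Ap, unfolded sum_gb sc_def brk_def BP, simplified] coc_e[OF L C, of Ap Bp Ap Bp, unfolded sum_gb sc_def brk_def BP, simplified] coc_e[OF L C, of Ap Am Ap Am, unfolded sum_gb sc_def brk_def BP, simplified] coc_e[OF L C, of Ap Am N M, unfolded sum_gb sc_def brk_def BP, simplified] coc_e[OF L C, of Ap Bm M Am, unfolded sum_gb sc_def brk_def BP, simplified] coc_e[OF L C, of Ap Bm Am M, unfolded sum_gb sc_def brk_def BP, simplified] coc_e[OF L C, of Ap Am M M, unfolded sum_gb sc_def brk_def BP, simplified] s_Ap_N_Ap s_Ap_Ap_N s_Ap_Ap_M s_Ap_Am_Bp s_Ap_Bp_Am s_Ap_M_Ap s_Am_N_Am s_Am_Ap_Bm s_Am_Am_M s_Bm_N_Bm s_Bm_Am_Am s_Bm_Bm_M s_Bm_M_Bm s_M_N_M s_M_Ap_Am s_M_M_N s_M_M_M by linarith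
  have s_Am_Bm_Ap: "\<delta> (e Am) Bm Ap = 0"
    using coc_e[OF L C, of Ap Bm M Am, unfolded sum_gb sc_def brk_def BP, simplified] coc_e[OF L C, of Ap Am M N, unfolded sum_gb sc_def brk_def BP, simplified] coc_e[OF L C, of Ap Bp Ap Bp, unfolded sum_gb sc_def brk_def BP, simplified] coc_e[OF L C, of Ap Am Am Ap, unfolded sum_gb sc_def brk_def BP, simplified] coc_e[OF L C, of Ap Bm Ap Bm, unfolded sum_gb sc_def brk_def BP, simplified] coc_e[OF L C, of Ap Am Ap Am, unfolded sum_gb sc_def brk_def BP, simplified] coc_e[OF L C, of Ap Am N M, unfolded sum_gb sc_def brk_def BP, simplified] coc_e[OF L C, of Ap Bm Am M, unfolded sum_gb sc_def brk_def BP, simplified] coc_e[OF L C, of Ap Bp Bp Ap, unfolded sum_gb sc_def brk_def BP, simplified] coc_e[OF L C, of Ap Am M M, unfolded sum_gb sc_def brk_def BP, simplified] s_Ap_N_Ap s_Ap_Ap_N s_Ap_Ap_M s_Ap_Am_Bp s_Ap_Bp_Am s_Ap_M_Ap s_Am_N_Am s_Am_Ap_Bm s_Am_Am_N s_Am_Am_M s_Bm_N_Bm s_Bm_Am_Am s_Bm_Bm_M s_Bm_M_Bm s_M_N_M s_M_Ap_Am s_M_Am_Ap s_M_M_N s_M_M_M by linarith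
  note S = s_Ap_N_N s_N_N_N s_Ap_N_Bp s_Ap_N_Bm s_N_Bm_Bp s_Ap_Bp_N s_N_Bp_Bm s_Ap_Bp_Bp s_Ap_Bp_Bm s_Ap_Bm_N s_Ap_Bm_Bp s_Ap_Bm_Bm s_Am_N_N s_Am_N_Bp s_Am_N_Bm s_Am_Bp_N s_Am_Bp_Bp s_Am_Bp_Bm s_Am_Bm_N s_Am_Bm_Bp s_Am_Bm_Bm s_N_N_M s_N_M_N s_Bm_Ap_Ap s_Bm_Ap_Bp s_Bm_Bp_Ap s_Bm_Bp_Bp s_N_N_Ap s_N_N_Bp s_N_Bp_Ap s_M_N_Ap s_M_N_Am s_M_N_Bp s_M_N_Bm s_M_Ap_N s_M_Ap_Ap s_M_Ap_Bp s_M_Ap_Bm s_M_Ap_M s_M_Am_N s_M_Am_Am s_M_Am_Bp s_M_Am_Bm s_M_Am_M s_M_Bp_N s_M_Bp_Ap s_M_Bp_Am s_M_Bp_Bp s_M_Bp_M s_M_Bm_N s_M_Bm_Ap s_M_Bm_Am s_M_Bm_Bm s_M_Bm_M s_M_M_Ap s_M_M_Am s_M_M_Bp s_M_M_Bm s_Ap_Ap_Bp s_N_Ap_Am s_N_Am_Ap s_M_N_N s_M_Bp_Bm s_M_Bm_Bp s_Am_Am_Bp s_Am_N_Ap s_Am_N_M s_Am_Bp_M s_Bm_N_Ap s_Bm_Bp_Am s_M_N_M s_M_M_N s_M_Ap_Am s_M_Am_Ap s_N_Ap_N s_N_Bp_N s_N_Ap_Ap s_N_Ap_Bp s_N_Am_Am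 s_N_Bp_Bp s_N_Bm_Bm s_N_M_M s_Ap_Ap_Ap s_Ap_Bp_Ap s_Ap_Am_Am s_Ap_M_M s_Am_Ap_N s_Am_M_N s_Am_Ap_Ap s_Am_Am_Am s_Am_Bp_Am s_Am_Am_M s_Am_M_Bp s_Am_M_M s_Bm_N_N s_Bm_Ap_N s_Bm_N_M s_Bm_Ap_Bm s_Bm_Ap_M s_Bm_Am_Am s_Bm_Am_Bp s_Bm_Am_M s_Bm_Bp_Bm s_Bm_Bm_Bm s_Bm_M_M s_M_M_M s_Ap_Am_Bm s_Ap_Bm_Am s_Am_Ap_Bp s_Am_Bp_Ap s_N_Bm_Am s_N_Am_Bp s_N_Am_Bm s_N_Am_N s_N_Bp_Am s_N_N_Am s_N_N_Bm s_N_Bm_N s_N_M_Bm s_N_Bm_M s_Bm_N_Am s_Bm_N_Bp s_N_Bp_M s_Bm_Ap_Am s_Bm_Am_N s_Bm_Am_Ap s_N_Ap_M s_Bm_Bp_N s_Bm_Bp_M s_N_M_Bp s_N_M_Ap s_Bm_M_Bp s_Ap_N_Am s_Ap_N_M s_Ap_Ap_Bm s_Ap_Am_N s_Ap_Am_M s_Ap_Bp_M s_Ap_Bm_Ap s_Ap_Bm_M s_Ap_M_N s_Ap_M_Am s_Ap_M_Bp s_Ap_M_Bm s_Am_Ap_Am s_Am_Bm_Am s_Am_Am_Ap s_Am_Am_Bm s_Am_Ap_M s_Am_M_Ap s_Am_Bm_M s_Ap_Ap_Am s_Ap_Am_Ap s_Am_M_Bm s_N_Bm_Ap s_N_Ap_Bm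 s_N_Am_M s_N_M_Am s_Bm_Bm_Am s_Bm_Am_Bm s_Bm_N_Bm s_Bm_Bm_N s_Bm_M_Bm s_Bm_Bm_M s_Ap_N_Ap s_Ap_Ap_N s_Ap_Ap_M s_Ap_Am_Bp s_Ap_Bp_Am s_Ap_M_Ap s_Am_N_Am s_Am_Ap_Bm s_Am_Am_N s_Am_Bm_Ap
  have j1: "\<delta> (e Bm) Bm Ap * \<delta> (e Bm) Bm Ap = 0"
    using jac[where i=N and j=M and m=Ap and l=Am] by (simp add: sum_gb BP S algebra_simps)
  have x0: "\<delta> (e Bm) Bm Ap = 0" using j1 by (metis mult_eq_0_iff)
  have j2: "2 * \<delta> (e Am) M Am * \<delta> (e Bm) M Ap - \<delta> (e Bm) Bm Bp * \<delta> (e Bm) M Am = 0"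
    using jac[where i=M and j=N and m=Ap and l=Bm] by (simp add: sum_gb BP S x0 algebra_simps)
  define a2 where "a2 = \<delta> (e Bm) Bm Bp / 2"
  define a3 where "a3 = - \<delta> (e Bm) M Am / 2"
  define a5 where "a5 = - \<delta> (e Bm) M Ap / 2"
  define c2 where "c2 = \<delta> (e Am) M Am"
  define a4 where "a4 = - (\<delta> (e Bm) M N + \<delta> (e Bm) Bm Bp) / 4"
  have cons: "a2 * a3 - a5 * c2 = 0"
    unfolding a2_def a3_def a5_def c2_def using j2 by (simp add: algebra_simps)
  have E: "\<delta> (e a) i j = ad2 (e a) (rmat a2 a3 a4 a5 c2) i j" for a i j
    apply (cases a; cases i; cases j)
    apply (simp_all add: ad2_e sum_gb S BP x0 a2_def a3_def a4_def a5_def c2_def)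
    apply (simp_all add: field_simps)
    done
  have "\<forall>X. \<delta> X = ad2 X (rmat a2 a3 a4 a5 c2)"
  proof
    fix X
    show "\<delta> X = ad2 X (rmat a2 a3 a4 a5 c2)"
      by (rule ext, rule ext) (simp add: lin_expand[OF L, of X] ad2_lin[of X] E)
  qed
  with cons show ?thesis by blast
qed

lemma schouten_rmat:
  assumes h: "a2 * a3 - a5 * c2 = 0"
  shows "schouten (rmat a2 a3 a4 a5 c2) p q u = - (c2 ^ 2) * wedge3 (e Ap) (e Am) (e M) p q u"
proof -
  have h': "a2 * a3 = a5 * c2" using h by simp
  show ?thesis
    apply (cases p; cases q; cases u)
    apply (simp_all add: schouten_red sum_gb wedge3_def e_def power2_eq_square)
    apply (metis h' mult.commute)+
    done
qed


lemma w3val: "wedge3 (e Ap) (e Am) (e M) Ap Am M = 1"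
  by (simp add: wedge3_def e_def)

theorem mainTheorem3:
  shows "(\<forall>\<delta>. lie_bialgebra \<delta> \<longrightarrow>
            (\<delta> (e Bp) = (\<lambda>i j. 0) \<longleftrightarrow>
              (\<exists>a2 a3 a4 a5 c2. a2 * a3 - a5 * c2 = 0 \<and>
                 (\<forall>X. \<delta> X = ad2 X (rmat a2 a3 a4 a5 c2)))))
       \<and> (\<forall>a2 a3 a4 a5 c2. a2 * a3 - a5 * c2 = 0 \<longrightarrow>
            schouten (rmat a2 a3 a4 a5 c2) = (\<lambda>i j k. - (c2 ^ 2) * wedge3 (e Ap) (e Am) (e M) i j k)
          \<and> (schouten (rmat a2 a3 a4 a5 c2) \<noteq> (\<lambda>i j k. 0) \<longleftrightarrow> c2 \<noteq> 0)
          \<and> (c2 \<noteq> 0 \<longrightarrow> a5 = a2 * a3 / c2)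
          \<and> (schouten (rmat a2 a3 a4 a5 c2) = (\<lambda>i j k. 0) \<longleftrightarrow> c2 = 0)
          \<and> (c2 = 0 \<longrightarrow> a2 * a3 = 0))"
proof (intro conjI allI impI)
  fix \<delta> :: "vec \<Rightarrow> tens2"
  assume LB: "lie_bialgebra \<delta>"
  show "\<delta> (e Bp) = (\<lambda>i j. 0) \<longleftrightarrow>
              (\<exists>a2 a3 a4 a5 c2. a2 * a3 - a5 * c2 = 0 \<and>
                 (\<forall>X. \<delta> X = ad2 X (rmat a2 a3 a4 a5 c2)))"
  proof
    assume "\<delta> (e Bp) = (\<lambda>i j. 0)"
    then show "\<exists>a2 a3 a4 a5 c2. a2 * a3 - a5 * c2 = 0 \<and>
                 (\<forall>X. \<delta> X = ad2 X (rmat a2 a3 a4 a5 c2))" using fwd LB by blast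
  next
    assume "\<exists>a2 a3 a4 a5 c2. a2 * a3 - a5 * c2 = 0 \<and>
                 (\<forall>X. \<delta> X = ad2 X (rmat a2 a3 a4 a5 c2))"
    then obtain a2 a3 a4 a5 c2 where D: "\<forall>X. \<delta> X = ad2 X (rmat a2 a3 a4 a5 c2)" by blast
    have "ad2 (e Bp) (rmat a2 a3 a4 a5 c2) i j = 0" for i j
      by (cases i; cases j) (simp_all add: ad2_e sum_gb)
    then show "\<delta> (e Bp) = (\<lambda>i j. 0)" using D by auto
  qed
next
  fix a2 a3 a4 a5 c2 :: real
  assume h: "a2 * a3 - a5 * c2 = 0"
  have S: "schouten (rmat a2 a3 a4 a5 c2) = (\<lambda>i j k. - (c2 ^ 2) * wedge3 (e Ap) (e Am) (e M) i j k)"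
    using schouten_rmat[OF h] by blast
  then show "schouten (rmat a2 a3 a4 a5 c2) = (\<lambda>i j k. - (c2 ^ 2) * wedge3 (e Ap) (e Am) (e M) i j k)" .
  have iff: "schouten (rmat a2 a3 a4 a5 c2) = (\<lambda>i j k. 0) \<longleftrightarrow> c2 = 0"
  proof
    assume "schouten (rmat a2 a3 a4 a5 c2) = (\<lambda>i j k. 0)"
    then have "- (c2 ^ 2) * wedge3 (e Ap) (e Am) (e M) Ap Am M = 0" using S by metis
    then show "c2 = 0" by (simp add: w3val)
  next
    assume "c2 = 0"
    then show "schouten (rmat a2 a3 a4 a5 c2) = (\<lambda>i j k. 0)" using S by simp
  qed
  then show "schouten (rmat a2 a3 a4 a5 c2) = (\<lambda>i j k. 0) \<longleftrightarrow> c2 = 0" .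
  from iff show "schouten (rmat a2 a3 a4 a5 c2) \<noteq> (\<lambda>i j k. 0) \<longleftrightarrow> c2 \<noteq> 0" by blast
  show "c2 \<noteq> 0 \<Longrightarrow> a5 = a2 * a3 / c2" using h by (simp add: field_simps)
  show "c2 = 0 \<Longrightarrow> a2 * a3 = 0" using h by simp
qed

end
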